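(* Let $0<q<1$ and let $n,k$ be integers with $1\le n\le k$. Then \[ \sum_{\substack{s_1,\dots,s_n\ge1\\ s_1+\cdots+s_n=k}}\zeta[s_1+1,s_2,\dots,s_n] = \zeta[k+1], \] the sum being over all $n$-tuples of positive integers with sum $k$.
   Context: Fix $0<q<1$. For real $x$, $[x]_q := (1-q^x)/(1-q)$. For positive integers $s_1,\dots,s_N$ with $s_1>1$, $\zeta[s_1,\dots,s_N] := \sum_{k_1>\cdots>k_N>0}\prod_{j=1}^N q^{(s_j-1)k_j}/[k_j]_q^{s_j}$ (sum over positive integers). *)

theory Defs
  imports "HOL-Analysis.Analysis"
begin

definition qint :: "real \<Rightarrow> real \<Rightarrow> real" where
  "qint q x = (1 - q powr x) / (1 - q)"

definition zeta_index :: "nat \<Rightarrow> nat list set" where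
  "zeta_index N = {ks. length ks = N \<and> sorted_wrt (>) ks \<and> (\<forall>k\<in>set ks. 0 < k)}"

definition qzeta :: "real \<Rightarrow> nat list \<Rightarrow> real" where
  "qzeta q s = (\<Sum>\<^sub>\<infinity>ks\<in>zeta_index (length s).
      \<Prod>j<length s. q ^ ((s!j - 1) * ks!j) / (qint q (real (ks!j))) ^ (s!j))"

end

theory Submission
  imports Defs
begin

context
  fixes q :: real
  assumes q0: "0 < q" and q1: "q < 1"
begin

definition "aa k = 1 / qint q (real k)"
definition "bb k = q ^ k / qint q (real k)"
definition "ff t k = aa k / (1 - t * bb k)"
definition "DD t n = (\<Prod>i\<in>{1..n}. ff t i)"
definition "CC t k m = q ^ (m * k) * DD t (m + k) / (DD t k * DD t m)"
definition "TT s k = q ^ ((s - 1) * k) / (qint q (real k)) ^ s"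

lemma qint_nat: "qint q (real k) = (1 - q ^ k) / (1 - q)"
  using q0 by (simp add: qint_def powr_realpow)

lemma qint0[simp]: "qint q 0 = 0" using q0 by (simp add: qint_def)

lemma qint_ge1: "k \<ge> 1 \<Longrightarrow> qint q (real k) \<ge> 1"
proof -
  assume "k \<ge> 1"
  then have "q ^ k \<le> q" using q0 q1 by (metis power_decreasing power_one_right less_imp_le)
  then show ?thesis using q1 by (simp add: qint_nat field_simps)
qed

lemma qint_le: "qint q (real k) \<le> 1 / (1 - q)"
  using q0 q1 by (simp add: qint_nat divide_right_mono)

lemma qint_add: "qint q (real (m + k)) = qint q (real m) + q ^ m * qint q (real k)"
  unfolding qint_nat using q1 by (simp add: field_simps power_add)

lemma aa_pos: "k \<ge> 1 \<Longrightarrow> 0 < aa k" using qint_ge1[of k] by (simp add: aa_def)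
lemma aa_le1: "aa k \<le> 1" using qint_ge1[of k] by (cases "k = 0") (auto simp: aa_def)
lemma aa_ge: "k \<ge> 1 \<Longrightarrow> 1 - q \<le> aa k"
proof -
  assume k: "k \<ge> 1"
  have "qint q (real k) \<le> 1 / (1 - q)" by (rule qint_le)
  moreover have "0 < qint q (real k)" using qint_ge1[OF k] by simp
  ultimately show ?thesis using q1 by (simp add: aa_def field_simps)
qed
lemma aa_0[simp]: "aa 0 = 0" by (simp add: aa_def)
lemma bb_0[simp]: "bb 0 = 0" by (simp add: bb_def)
lemma ff_0[simp]: "ff t 0 = 0" by (simp add: ff_def)
lemma bb_eq: "bb k = q ^ k * aa k" by (simp add: bb_def aa_def)
lemma bb_nonneg: "0 \<le> bb k" using q0 qint_ge1[of k] by (cases "k = 0") (auto simp: bb_def)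
lemma bb_pos: "k \<ge> 1 \<Longrightarrow> 0 < bb k" using q0 aa_pos by (simp add: bb_eq)
lemma bb_le: "bb k \<le> q ^ k"
  using aa_le1[of k] q0 by (simp add: bb_eq mult_left_le)
lemma bb_le1: "bb k \<le> 1"
  using bb_le[of k] q0 q1 by (meson less_imp_le order_trans power_le_one)
lemma aa_nonneg: "0 \<le> aa k" using aa_pos[of k] by (cases "k = 0") auto

lemma tb_lt1: "0 \<le> t \<Longrightarrow> t < 1 \<Longrightarrow> t * bb k < 1"
proof -
  assume "0 \<le> t" "t < 1"
  then have "t * bb k \<le> t" using bb_le1[of k] by (simp add: mult_left_le)
  then show ?thesis using \<open>t < 1\<close> by simp
qed

lemma ff_pos: "0 \<le> t \<Longrightarrow> t < 1 \<Longrightarrow> k \<ge> 1 \<Longrightarrow> 0 < ff t k"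
  using tb_lt1[of t k] aa_pos[of k] by (simp add: ff_def)
lemma ff_nonneg: "0 \<le> t \<Longrightarrow> t < 1 \<Longrightarrow> 0 \<le> ff t k"
  using ff_pos[of t k] by (cases "k = 0") auto
lemma ff_ge_aa: "0 \<le> t \<Longrightarrow> t < 1 \<Longrightarrow> aa k \<le> ff t k"
proof -
  assume t: "0 \<le> t" "t < 1"
  have "0 < 1 - t * bb k" "1 - t * bb k \<le> 1" using tb_lt1[OF t] bb_nonneg[of k] t by auto
  then show ?thesis using aa_nonneg[of k] by (simp add: ff_def divide_simps mult_left_le)
qed
lemma ff_le: "0 \<le> t \<Longrightarrow> t < 1 \<Longrightarrow> ff t k \<le> 1 / (1 - t)"
proof -
  assume t: "0 \<le> t" "t < 1"
  have "t * bb k \<le> t" using bb_le1[of k] t by (simp add: mult_left_le)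
  then have "1 - t \<le> 1 - t * bb k" by simp
  moreover have "0 < 1 - t" using t by simp
  ultimately show ?thesis using aa_le1[of k] aa_nonneg[of k]
    by (smt (verit) ff_def frac_le)
qed

lemma ff_inv: "0 \<le> t \<Longrightarrow> t < 1 \<Longrightarrow> k \<ge> 1 \<Longrightarrow> 1 / ff t k = qint q (real k) - t * q ^ k"
proof -
  assume t: "0 \<le> t" "t < 1" and k: "k \<ge> 1"
  have "qint q (real k) \<ge> 1" by (rule qint_ge1[OF k])
  then show ?thesis using tb_lt1[OF t, of k] by (simp add: ff_def aa_def bb_def field_simps)
qed

lemma K_id: "0 \<le> t \<Longrightarrow> t < 1 \<Longrightarrow> k \<ge> 1 \<Longrightarrow>
   1 / ff t (m + k) = qint q (real m) + q ^ m / ff t k"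
proof -
  assume t: "0 \<le> t" "t < 1" and k: "k \<ge> 1"
  have "1 / ff t (m + k) = qint q (real (m + k)) - t * q ^ (m + k)" using ff_inv[OF t, of "m+k"] k by simp
  also have "\<dots> = qint q (real m) + q ^ m * (qint q (real k) - t * q ^ k)"
    using qint_add[of m k] by (simp add: power_add algebra_simps)
  also have "\<dots> = qint q (real m) + q ^ m / ff t k" using ff_inv[OF t k] by (simp add: divide_inverse)
  finally show ?thesis .
qed

lemma DD_0[simp]: "DD t 0 = 1" by (simp add: DD_def)
lemma DD_Suc: "DD t (Suc n) = DD t n * ff t (Suc n)"
  by (simp add: DD_def atLeastAtMostSuc_conv mult.commute)
lemma DD_pos: "0 \<le> t \<Longrightarrow> t < 1 \<Longrightarrow> 0 < DD t n"
  unfolding DD_def by (rule prod_pos) (auto intro: ff_pos)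

lemma CC_0[simp]: "0 \<le> t \<Longrightarrow> t < 1 \<Longrightarrow> CC t 0 m = 1"
  using DD_pos[of t m] by (simp add: CC_def)
lemma CC_sym: "CC t k m = CC t m k"
  by (simp add: CC_def mult.commute add.commute)
lemma CC_pos: "0 \<le> t \<Longrightarrow> t < 1 \<Longrightarrow> 0 < CC t k m"
  using DD_pos[of t] q0 by (simp add: CC_def)
lemma CC_step: "0 \<le> t \<Longrightarrow> t < 1 \<Longrightarrow>
   CC t (Suc k) m = CC t k m * q ^ m * ff t (m + Suc k) / ff t (Suc k)"
proof -
  assume t: "0 \<le> t" "t < 1"
  have "ff t (Suc k) > 0" using ff_pos[OF t] by simp
  moreover have "DD t k > 0" "DD t m > 0" "DD t (m + k) > 0" using DD_pos[OF t] by auto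
  moreover have "DD t (m + Suc k) = DD t (m+k) * ff t (m + Suc k)"
    by (metis DD_Suc add_Suc_right)
  ultimately show ?thesis
    by (simp add: CC_def DD_Suc[of t k] power_add field_simps)
qed

lemma T1': assumes t: "0 \<le> t" "t < 1" and m: "m \<ge> 1"
  shows "ff t (Suc k) * CC t (Suc k) m = bb m * (CC t k m - CC t (Suc k) m)"
proof -
  define X where "X = CC t k m"
  define F where "F = ff t (Suc k)"
  define G where "G = ff t (m + Suc k)"
  define Q where "Q = qint q (real m)"
  have X: "X > 0" unfolding X_def by (rule CC_pos[OF t])
  have F: "F > 0" unfolding F_def by (rule ff_pos[OF t]) simp
  have G: "G > 0" unfolding G_def by (rule ff_pos[OF t]) simp
  have Q: "Q \<ge> 1" unfolding Q_def by (rule qint_ge1[OF m])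
  have K: "1 / G = Q + q ^ m / F" unfolding G_def Q_def F_def by (rule K_id[OF t]) simp
  have bb: "bb m = q ^ m / Q" by (simp add: bb_def Q_def)
  have step: "CC t (Suc k) m = X * q ^ m * G / F" unfolding X_def G_def F_def by (rule CC_step[OF t])
  have "G * Q = 1 - q ^ m * G / F"
  proof -
    have "G * (1 / G) = 1" using G by simp
    then have "G * (Q + q ^ m / F) = 1" by (simp only: K)
    then show ?thesis by (simp add: algebra_simps)
  qed
  then have "q ^ m * G = bb m * (1 - q ^ m * G / F)" using Q by (simp add: bb flip: \<open>G * Q = 1 - q ^ m * G / F\<close>)
  then have "X * (q ^ m * G) = X * (bb m * (1 - q ^ m * G / F))" by simp
  then show ?thesis unfolding step F_def[symmetric] X_def[symmetric] using F
    by (simp add: field_simps)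
qed

lemma CC_decay: assumes t: "0 \<le> t" "t < 1" and m: "m \<ge> 1"
  shows "CC t (Suc k) m * (2 - q) \<le> CC t k m"
proof -
  have e: "CC t (Suc k) m * (ff t (Suc k) + bb m) = bb m * CC t k m"
    using T1'[OF t m, of k] by (simp add: algebra_simps)
  have b: "0 < bb m" "bb m \<le> 1" using bb_pos[OF m] bb_le1 by auto
  have f: "1 - q \<le> ff t (Suc k)" using aa_ge[of "Suc k"] ff_ge_aa[OF t, of "Suc k"] by simp
  have c: "0 < CC t (Suc k) m" by (rule CC_pos[OF t])
  have "bb m * (2 - q) \<le> ff t (Suc k) + bb m" using b f q1
  proof -
    have "bb m * (1 - q) \<le> 1 - q" using b q1 by (intro mult_left_le_one_le) auto
    then show ?thesis using f by (simp add: algebra_simps)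
  qed
  then have "CC t (Suc k) m * (bb m * (2 - q)) \<le> CC t (Suc k) m * (ff t (Suc k) + bb m)"
    using c by (simp add: mult_left_mono)
  then have "bb m * (CC t (Suc k) m * (2 - q)) \<le> bb m * CC t k m" using e by (simp add: algebra_simps)
  then show ?thesis using b by simp
qed

lemma CC_le: assumes t: "0 \<le> t" "t < 1" and m: "m \<ge> 1"
  shows "CC t k m \<le> (1 / (2 - q)) ^ k"
proof (induction k)
  case 0 then show ?case using CC_0[OF t] by simp
next
  case (Suc k)
  have "CC t (Suc k) m * (2 - q) \<le> CC t k m" by (rule CC_decay[OF t m])
  also have "\<dots> \<le> (1 / (2 - q)) ^ k" by (rule Suc)
  finally have "CC t (Suc k) m \<le> (1 / (2 - q)) ^ k / (2 - q)" using q1 by (simp add: pos_le_divide_eq)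
  then show ?case by (simp add: divide_inverse mult.commute)
qed

lemma CC_lim: assumes t: "0 \<le> t" "t < 1" and m: "m \<ge> 1"
  shows "(\<lambda>k. CC t k m) \<longlonglongrightarrow> 0"
proof (rule Lim_null_comparison[of _ "\<lambda>k. (1 / (2 - q)) ^ k"])
  show "\<forall>\<^sub>F k in sequentially. norm (CC t k m) \<le> (1 / (2 - q)) ^ k"
    using CC_le[OF t m] CC_pos[OF t] by (simp add: less_imp_le)
  show "(\<lambda>k. (1 / (2 - q)) ^ k) \<longlonglongrightarrow> 0"
    using q0 q1 by (intro LIMSEQ_power_zero) auto
qed

lemma T1sum: assumes t: "0 \<le> t" "t < 1" and m: "m \<ge> 1"
  shows "(\<lambda>k. if k' < k then ff t k * CC t k m else 0) sums (bb m * CC t k' m)"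
proof -
  define F where "F n = bb m * CC t (n + k') m" for n
  have "F \<longlonglongrightarrow> bb m * 0" unfolding F_def
    by (intro tendsto_mult tendsto_const) (rule LIMSEQ_ignore_initial_segment[OF CC_lim[OF t m]])
  then have "(\<lambda>n. F n - F (Suc n)) sums (F 0 - 0)" using telescope_sums' by fastforce
  moreover have "F n - F (Suc n) = ff t (Suc n + k') * CC t (Suc n + k') m" for n
    using T1'[OF t m, of "k' + n"] by (simp add: F_def algebra_simps)
  ultimately have "(\<lambda>n. ff t (n + Suc k') * CC t (n + Suc k') m) sums (bb m * CC t k' m)"
    by (simp add: F_def)
  then have "(\<lambda>n. (\<lambda>k. if k' < k then ff t k * CC t k m else 0) (n + Suc k')) sums (bb m * CC t k' m)"
    by simp
  then show ?thesis by (subst (asm) sums_iff_shift) simp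
qed

end

lemma swap_sums:
  fixes g :: "nat \<Rightarrow> nat \<Rightarrow> real"
  assumes nn: "\<And>i j. 0 \<le> g i j" and inner: "\<And>i. g i sums h i" and outer: "h sums S"
  shows "(\<lambda>j. \<Sum>i. g i j) sums S" and "\<And>j. summable (\<lambda>i. g i j)"
proof -
  have hn: "0 \<le> h i" for i using sums_le[OF _ sums_zero inner[of i]] nn by auto
  have inner': "((\<lambda>y. (\<lambda>(i,j). g i j) (i, y)) has_sum h i) UNIV" for i
    using sums_nonneg_imp_has_sum[OF inner[of i]] nn by simp
  have outer': "(h has_sum S) UNIV" using sums_nonneg_imp_has_sum[OF outer] hn by simp
  have summ: "(\<lambda>(i,j). g i j) summable_on Sigma UNIV (\<lambda>_. UNIV)"
    by (rule summable_on_SigmaI[OF inner' has_sum_imp_summable[OF outer']]) (use nn in auto)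
  have hs: "((\<lambda>(i,j). g i j) has_sum S) (Sigma UNIV (\<lambda>_. UNIV))"
    by (rule has_sum_SigmaI[OF inner' outer' summ])
  then have hs2: "((\<lambda>(j,i). g i j) has_sum S) (UNIV \<times> UNIV)"
    by (subst (asm) has_sum_swap) (simp add: case_prod_unfold)
  have s2: "(\<lambda>i. g i j) summable_on UNIV" for j
    using summable_on_SigmaD1[of "\<lambda>j i. g i j" UNIV "\<lambda>_. UNIV" j] hs2
    by (auto simp: has_sum_imp_summable)
  then show sm: "summable (\<lambda>i. g i j)" for j
    by (simp add: summable_on_UNIV_nonneg_real_iff nn)
  have "((\<lambda>i. g i j) has_sum (\<Sum>i. g i j)) UNIV" for j
    using sums_nonneg_imp_has_sum[OF summable_sums[OF sm]] nn by simp
  then have "((\<lambda>j. \<Sum>i. g i j) has_sum S) UNIV"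
    by (intro has_sum_Sigma'[OF hs2]) (simp add: case_prod_unfold)
  then show "(\<lambda>j. \<Sum>i. g i j) sums S" by (rule has_sum_imp_sums)
qed


context
  fixes q :: real
  assumes q0: "0 < q" and q1: "q < 1"
begin

fun PP :: "real \<Rightarrow> nat \<Rightarrow> nat \<Rightarrow> real" where
  "PP t 0 m = 1"
| "PP t (Suc j) m = (\<Sum>k<m. ff q t k * PP t j k)"

lemma PP_nonneg: "0 \<le> t \<Longrightarrow> t < 1 \<Longrightarrow> 0 \<le> PP t j m"
  by (induction j arbitrary: m) (auto intro!: sum_nonneg mult_nonneg_nonneg ff_nonneg[OF q0 q1])

lemma T2: assumes t: "0 \<le> t" "t < 1" and k: "k \<ge> 1"
  shows "(\<lambda>m. ff q t m * CC q t k m) sums bb q k"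
proof -
  have "(\<lambda>j. if 0 < j then ff q t j * CC q t j k else 0) sums (bb q k * CC q t 0 k)"
    by (rule T1sum[OF q0 q1 t k])
  moreover have "(\<lambda>j. if 0 < j then ff q t j * CC q t j k else 0) = (\<lambda>m. ff q t m * CC q t k m)"
    by (auto simp: CC_sym[OF q0 q1] fun_eq_iff ff_0[OF q0 q1])
  ultimately show ?thesis using CC_0[OF q0 q1 t] by simp
qed

lemma T3: assumes t: "0 \<le> t" "t < 1" and p: "p \<ge> 1"
  shows "(\<lambda>m. ff q t m * PP t j m * CC q t m p) sums (bb q p ^ Suc j)"
proof (induction j)
  case 0
  have "(\<lambda>k. if 0 < k then ff q t k * CC q t k p else 0) sums (bb q p * CC q t 0 p)"
    by (rule T1sum[OF q0 q1 t p])
  moreover have "(\<lambda>k. if 0 < k then ff q t k * CC q t k p else 0) = (\<lambda>m. ff q t m * PP t 0 m * CC q t m p)"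
    by (auto simp: fun_eq_iff ff_0[OF q0 q1])
  ultimately show ?case using CC_0[OF q0 q1 t] by simp
next
  case (Suc j)
  define g where "g m' m = (if m' < m then ff q t m * CC q t m p * (ff q t m' * PP t j m') else 0)" for m' m
  have nn: "0 \<le> g i j" for i j
    unfolding g_def using ff_nonneg[OF q0 q1 t] PP_nonneg[OF t] CC_pos[OF q0 q1 t, THEN less_imp_le]
    by (auto intro!: mult_nonneg_nonneg)
  have inner: "g m' sums (bb q p * CC q t m' p * (ff q t m' * PP t j m'))" for m'
  proof -
    have "(\<lambda>k. if m' < k then ff q t k * CC q t k p else 0) sums (bb q p * CC q t m' p)"
      by (rule T1sum[OF q0 q1 t p])
    moreover have "g m' = (\<lambda>k. (if m' < k then ff q t k * CC q t k p else 0) * (ff q t m' * PP t j m'))"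
      by (auto simp: fun_eq_iff g_def)
    ultimately show ?thesis using sums_mult2 by fastforce
  qed
  have outer: "(\<lambda>m'. bb q p * CC q t m' p * (ff q t m' * PP t j m')) sums (bb q p * bb q p ^ Suc j)"
    using sums_mult[OF Suc, of "bb q p"] by (simp add: algebra_simps)
  have "(\<lambda>m. \<Sum>m'. g m' m) sums (bb q p * bb q p ^ Suc j)"
    by (rule swap_sums(1)[OF nn inner outer])
  moreover have "(\<Sum>m'. g m' m) = ff q t m * PP t (Suc j) m * CC q t m p" for m
  proof -
    have "(\<Sum>m'. g m' m) = (\<Sum>m'<m. g m' m)"
      by (rule suminf_finite) (auto simp: g_def)
    also have "\<dots> = ff q t m * CC q t m p * (\<Sum>m'<m. ff q t m' * PP t j m')"
      by (simp add: g_def sum_distrib_left)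
    finally show ?thesis by (simp add: algebra_simps)
  qed
  ultimately show ?case by simp
qed

lemma MT: assumes t: "0 \<le> t" "t < 1"
  shows "(\<lambda>m. bb q m * ff q t m * PP t j m) sums (\<Sum>p. ff q t p * bb q p ^ Suc j)"
proof -
  define g where "g p m = ff q t m * PP t j m * (ff q t p * CC q t m p)" for p m
  have nn: "0 \<le> g i j" for i j
    unfolding g_def using ff_nonneg[OF q0 q1 t] PP_nonneg[OF t] CC_pos[OF q0 q1 t, THEN less_imp_le]
    by (auto intro!: mult_nonneg_nonneg)
  have inner: "g p sums (ff q t p * bb q p ^ Suc j)" for p
  proof (cases "p = 0")
    case True
    then have "g p = (\<lambda>_. 0)" by (simp add: g_def ff_0[OF q0 q1] fun_eq_iff)
    then show ?thesis using True by (simp add: ff_0[OF q0 q1] sums_zero)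
  next
    case False
    have "g p = (\<lambda>m. ff q t m * PP t j m * CC q t m p * ff q t p)"
      by (simp add: g_def fun_eq_iff algebra_simps)
    with sums_mult2[OF T3[OF t, of p j], of "ff q t p"] False show ?thesis
      by (simp add: algebra_simps)
  qed
  have summ: "summable (\<lambda>p. ff q t p * bb q p ^ Suc j)"
  proof (rule summable_comparison_test')
    show "summable (\<lambda>p. 1 / (1 - t) * q ^ p)" using q0 q1 by (intro summable_mult summable_geometric) auto
    fix p
    have "bb q p ^ Suc j \<le> bb q p" using bb_le1[OF q0 q1, of p] bb_nonneg[OF q0 q1, of p]
      by (simp add: mult_left_le power_le_one)
    also have "\<dots> \<le> q ^ p" by (rule bb_le[OF q0 q1])
    finally have "bb q p ^ Suc j \<le> q ^ p" .
    then show "norm (ff q t p * bb q p ^ Suc j) \<le> 1 / (1 - t) * q ^ p"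
    proof -
      have "norm (ff q t p * bb q p ^ Suc j) = ff q t p * bb q p ^ Suc j"
        using ff_nonneg[OF q0 q1 t, of p] bb_nonneg[OF q0 q1, of p] by simp
      also have "\<dots> \<le> 1 / (1 - t) * q ^ p"
        using ff_le[OF q0 q1 t, of p] ff_nonneg[OF q0 q1 t, of p] bb_nonneg[OF q0 q1, of p]
          \<open>bb q p ^ Suc j \<le> q ^ p\<close> t by (intro mult_mono) auto
      finally show ?thesis .
    qed
  qed
  have "(\<lambda>m. \<Sum>p. g p m) sums (\<Sum>p. ff q t p * bb q p ^ Suc j)"
    by (rule swap_sums(1)[OF nn inner summable_sums[OF summ]])
  moreover have "(\<Sum>p. g p m) = bb q m * ff q t m * PP t j m" for m
  proof (cases "m = 0")
    case True then show ?thesis by (simp add: g_def ff_0[OF q0 q1])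
  next
    case False
    have "(\<lambda>p. g p m) sums (ff q t m * PP t j m * bb q m)"
      unfolding g_def by (rule sums_mult[OF T2[OF t, of m]]) (use False in auto)
    then show ?thesis by (simp add: sums_iff algebra_simps)
  qed
  ultimately show ?thesis by simp
qed

end

definition Comp :: "nat \<Rightarrow> nat \<Rightarrow> nat list set" where
  "Comp N K = {s :: nat list. length s = N \<and> (\<forall>x\<in>set s. 1 \<le> x) \<and> sum_list s = K}"

definition below :: "nat \<Rightarrow> nat list set" where
  "below m = {ks. \<forall>x\<in>set ks. x < m}"

lemma finite_Comp: "finite (Comp N K)"
proof (rule finite_subset)
  show "Comp N K \<subseteq> {s. set s \<subseteq> {0..K} \<and> length s = N}"
    by (auto simp: Comp_def member_le_sum_list)
  show "finite {s. set s \<subseteq> {0..K} \<and> length s = N}" by (rule finite_lists_length_eq) simp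
qed

lemma Comp_0: "Comp 0 K = (if K = 0 then {[]} else {})"
  by (auto simp: Comp_def)

lemma Comp_Suc: "Comp (Suc N) (Suc N + d) = (\<Union>e\<in>{..d}. (\<lambda>s'. Suc e # s') ` Comp N (N + (d - e)))"
proof (intro equalityI subsetI)
  fix s assume "s \<in> Comp (Suc N) (Suc N + d)"
  then obtain x s' where s: "s = x # s'" "length s' = N" "1 \<le> x" "\<forall>y\<in>set s'. 1 \<le> y"
      "x + sum_list s' = Suc N + d"
    by (auto simp: Comp_def length_Suc_conv)
  have "sum_list s' \<ge> N"
  proof -
    have "sum_list s' \<ge> sum_list (map (\<lambda>_. 1::nat) s')"
      using s(4) by (induction s') auto
    then show ?thesis using s(2) by (simp add: sum_list_triv)
  qed
  then have "x - 1 \<le> d" using s by linarith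
  moreover have "s' \<in> Comp N (N + (d - (x - 1)))" using s \<open>sum_list s' \<ge> N\<close> by (auto simp: Comp_def)
  ultimately show "s \<in> (\<Union>e\<in>{..d}. (\<lambda>s'. Suc e # s') ` Comp N (N + (d - e)))"
    using s by (auto intro!: bexI[of _ "x - 1"] image_eqI[of _ _ s'])
next
  fix s assume "s \<in> (\<Union>e\<in>{..d}. (\<lambda>s'. Suc e # s') ` Comp N (N + (d - e)))"
  then show "s \<in> Comp (Suc N) (Suc N + d)" by (auto simp: Comp_def)
qed

lemma sum_Comp_Suc:
  "(\<Sum>s\<in>Comp (Suc N) (Suc N + d). F s) = (\<Sum>e\<le>d. \<Sum>s'\<in>Comp N (N + (d - e)). F (Suc e # s'))"
proof -
  have "(\<Sum>s\<in>Comp (Suc N) (Suc N + d). F s) = (\<Sum>e\<le>d. \<Sum>s\<in>(\<lambda>s'. Suc e # s') ` Comp N (N + (d - e)). F s)"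
    unfolding Comp_Suc by (rule sum.UNION_disjoint) (auto simp: finite_Comp)
  also have "\<dots> = (\<Sum>e\<le>d. \<Sum>s'\<in>Comp N (N + (d - e)). F (Suc e # s'))"
    by (rule sum.cong[OF refl]) (simp add: sum.reindex inj_on_def)
  finally show ?thesis .
qed

lemma finite_zi_below: "finite (zeta_index N \<inter> below m)"
proof (rule finite_subset)
  show "zeta_index N \<inter> below m \<subseteq> {s. set s \<subseteq> {0..m} \<and> length s = N}"
    by (auto simp: zeta_index_def below_def)
  show "finite {s. set s \<subseteq> {0..m} \<and> length s = N}" by (rule finite_lists_length_eq) simp
qed

lemma zeta_index_0: "zeta_index 0 = {[]}" by (auto simp: zeta_index_def)

lemma zi_Suc: "zeta_index (Suc N) = (\<Union>k\<in>{0<..}. Cons k ` (zeta_index N \<inter> below k))"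
  by (auto simp: zeta_index_def below_def length_Suc_conv)

lemma zi_Suc_below: "zeta_index (Suc N) \<inter> below m = (\<Union>k\<in>{0<..<m}. Cons k ` (zeta_index N \<inter> below k))"
  apply (auto simp: zeta_index_def below_def length_Suc_conv)
  by (meson less_trans)

context
  fixes q :: real
  assumes q0: "0 < q" and q1: "q < 1"
begin

definition ZZ :: "nat list \<Rightarrow> nat \<Rightarrow> real" where
  "ZZ s m = (\<Sum>ks\<in>zeta_index (length s) \<inter> below m. \<Prod>j<length s. TT q (s!j) (ks!j))"

lemma ZZ_Nil[simp]: "ZZ [] m = 1"
  by (simp add: ZZ_def zeta_index_0 below_def)

lemma ZZ_Cons: "ZZ (x # s) m = (\<Sum>k\<in>{0<..<m}. TT q x k * ZZ s k)"
proof -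
  have "ZZ (x # s) m = (\<Sum>k\<in>{0<..<m}. \<Sum>ks\<in>Cons k ` (zeta_index (length s) \<inter> below k).
           \<Prod>j<Suc (length s). TT q ((x#s)!j) (ks!j))"
    unfolding ZZ_def length_Cons zi_Suc_below
    by (rule sum.UNION_disjoint) (auto simp: finite_zi_below)
  also have "\<dots> = (\<Sum>k\<in>{0<..<m}. \<Sum>ks\<in>zeta_index (length s) \<inter> below k.
           TT q x k * (\<Prod>j<length s. TT q (s!j) (ks!j)))"
    by (rule sum.cong[OF refl]) (simp add: sum.reindex inj_on_def prod.lessThan_Suc_shift del: prod.lessThan_Suc)
  also have "\<dots> = (\<Sum>k\<in>{0<..<m}. TT q x k * ZZ s k)"
    by (simp add: ZZ_def sum_distrib_left)
  finally show ?thesis .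
qed

lemma TT_eq: "s \<ge> 1 \<Longrightarrow> TT q s k = aa q k * bb q k ^ (s - 1)"
proof (cases s)
  case (Suc n)
  have "q ^ (n * k) = (q ^ k) ^ n" by (simp add: power_mult[symmetric] mult.commute)
  then show ?thesis using Suc
    by (simp add: TT_def[OF q0 q1] aa_def[OF q0 q1] bb_def[OF q0 q1] power_divide)
qed auto

lemma qint_nonneg: "0 \<le> qint q (real k)"
  using qint_ge1[OF q0 q1, of k] by (cases "k = 0") (auto simp: qint0[OF q0 q1])

lemma TT_nonneg: "0 \<le> TT q s k"
  unfolding TT_def[OF q0 q1] using q0 qint_nonneg[of k] by (intro divide_nonneg_nonneg zero_le_power) auto

lemma ZZ_nonneg: "0 \<le> ZZ s m"
  unfolding ZZ_def by (intro sum_nonneg prod_nonneg) (auto simp: TT_nonneg)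

definition HH :: "nat \<Rightarrow> nat \<Rightarrow> nat \<Rightarrow> real" where
  "HH N d m = (\<Sum>s\<in>Comp N (N + d). ZZ s m)"

lemma HH_nonneg: "0 \<le> HH N d m"
  unfolding HH_def by (intro sum_nonneg ZZ_nonneg)

lemma sum_lessThan_pos: "f 0 = 0 \<Longrightarrow> (\<Sum>k<m. f k) = (\<Sum>k\<in>{0<..<m}. (f :: nat \<Rightarrow> real) k)"
  by (rule sum.mono_neutral_right) auto

lemma HH_Suc: "HH (Suc N) d m = (\<Sum>k\<in>{0<..<m}. \<Sum>e\<le>d. aa q k * bb q k ^ e * HH N (d - e) k)"
proof -
  have "HH (Suc N) d m = (\<Sum>e\<le>d. \<Sum>s'\<in>Comp N (N + (d - e)). ZZ (Suc e # s') m)"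
    unfolding HH_def by (rule sum_Comp_Suc)
  also have "\<dots> = (\<Sum>e\<le>d. \<Sum>s'\<in>Comp N (N + (d - e)). \<Sum>k\<in>{0<..<m}. aa q k * bb q k ^ e * ZZ s' k)"
    by (simp add: ZZ_Cons TT_eq)
  also have "\<dots> = (\<Sum>e\<le>d. \<Sum>k\<in>{0<..<m}. aa q k * bb q k ^ e * HH N (d - e) k)"
    by (simp add: HH_def sum_distrib_left sum.swap[of _ "{0<..<m}"])
  also have "\<dots> = (\<Sum>k\<in>{0<..<m}. \<Sum>e\<le>d. aa q k * bb q k ^ e * HH N (d - e) k)"
    by (rule sum.swap)
  finally show ?thesis .
qed

lemma geom_ff: assumes t: "0 \<le> t" "t < 1"
  shows "(\<lambda>e. aa q k * (t * bb q k) ^ e) sums ff q t k"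
proof -
  have "norm (t * bb q k) < 1" using tb_lt1[OF q0 q1 t, of k] t bb_nonneg[OF q0 q1, of k] by simp
  from sums_mult[OF geometric_sums[OF this], of "aa q k"] show ?thesis
    by (simp add: ff_def[OF q0 q1] divide_inverse)
qed

lemma HH_gen: assumes t: "0 \<le> t" "t < 1"
  shows "(\<lambda>d. HH N d m * t ^ d) sums PP q t N m"
proof (induction N arbitrary: m)
  case 0
  have "(\<lambda>d. HH 0 d m * t ^ d) = (\<lambda>d. if d = 0 then 1 else 0)"
    by (auto simp: fun_eq_iff HH_def Comp_0)
  then show ?case using sums_single[of 0 "\<lambda>_. (1::real)"] by (simp add: PP.simps[OF q0 q1])
next
  case (Suc N)
  have c: "(\<lambda>d. \<Sum>e\<le>d. aa q k * (t * bb q k) ^ e * (HH N (d - e) k * t ^ (d - e))) sums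
      (ff q t k * PP q t N k)" for k
  proof -
    have s1: "summable (\<lambda>e. norm (aa q k * (t * bb q k) ^ e))"
      using geom_ff[OF t, of k] aa_nonneg[OF q0 q1, of k] bb_nonneg[OF q0 q1, of k] t
      by (simp add: sums_iff)
    have s2: "summable (\<lambda>d. norm (HH N d k * t ^ d))"
      using Suc[of k] HH_nonneg[of N _ k] t by (simp add: sums_iff)
    from Cauchy_product_sums[OF s1 s2] show ?thesis
      using geom_ff[OF t, of k] Suc[of k] by (simp add: sums_iff)
  qed
  have "(\<lambda>d. \<Sum>k\<in>{0<..<m}. \<Sum>e\<le>d. aa q k * (t * bb q k) ^ e * (HH N (d - e) k * t ^ (d - e))) sums
      (\<Sum>k\<in>{0<..<m}. ff q t k * PP q t N k)"
    by (rule sums_sum) (rule c)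
  moreover have "(\<Sum>k\<in>{0<..<m}. \<Sum>e\<le>d. aa q k * (t * bb q k) ^ e * (HH N (d - e) k * t ^ (d - e)))
      = HH (Suc N) d m * t ^ d" for d
  proof -
    have "(\<Sum>k\<in>{0<..<m}. \<Sum>e\<le>d. aa q k * (t * bb q k) ^ e * (HH N (d - e) k * t ^ (d - e)))
       = (\<Sum>k\<in>{0<..<m}. \<Sum>e\<le>d. aa q k * bb q k ^ e * HH N (d - e) k * t ^ d)"
      by (intro sum.cong refl) (auto simp: power_mult_distrib power_add[symmetric] algebra_simps)
    also have "\<dots> = HH (Suc N) d m * t ^ d"
      by (simp add: HH_Suc sum_distrib_right)
    finally show ?thesis .
  qed
  moreover have "(\<Sum>k\<in>{0<..<m}. ff q t k * PP q t N k) = PP q t (Suc N) m"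
    by (simp add: sum_lessThan_pos ff_0[OF q0 q1] PP.simps[OF q0 q1])
  ultimately show ?case by simp
qed

end

lemma powser_unique_pos:
  fixes A B :: "nat \<Rightarrow> real"
  assumes hA: "\<And>t. 0 < t \<Longrightarrow> t < 1 \<Longrightarrow> (\<lambda>d. A d * t ^ d) sums S t"
      and hB: "\<And>t. 0 < t \<Longrightarrow> t < 1 \<Longrightarrow> (\<lambda>d. B d * t ^ d) sums S t"
  shows "A d = B d"
proof -
  define D where "D d = A d - B d" for d
  have hD: "(\<lambda>d. D d * t ^ d) sums 0" if "0 < t" "t < 1" for t
    using sums_diff[OF hA[OF that] hB[OF that]] by (simp add: D_def algebra_simps)
  have "D d = 0"
  proof (induction d rule: less_induct)
    case (less d)
    define E where "E i = D (i + d)" for i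
    have hE: "(\<lambda>i. E i * t ^ i) sums 0" if t: "0 < t" "t < 1" for t
    proof -
      have "(\<Sum>i<d. D i * t ^ i) = 0" using less by simp
      then have "(\<lambda>i. D (i + d) * t ^ (i + d)) sums 0"
        using hD[OF t] by (subst sums_iff_shift) simp
      from sums_divide[OF this, of "t ^ d"] show ?thesis
        using t by (simp add: E_def power_add)
    qed
    define g where "g x = (\<Sum>i. E i * x ^ i)" for x :: real
    have "summable (\<lambda>i. E i * (1/2) ^ i)" using hE[of "1/2"] by (simp add: sums_iff)
    then have "isCont g 0" unfolding g_def by (rule isCont_powser) simp
    then have "(g \<longlongrightarrow> g 0) (at_right 0)"
      by (simp add: isCont_def filterlim_at_split)
    moreover have "(g \<longlongrightarrow> 0) (at_right 0)"
    proof (rule tendsto_eventually)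
      show "\<forall>\<^sub>F x in at_right 0. g x = 0"
      proof -
        have "\<forall>\<^sub>F x in at_right (0::real). 0 < x \<and> x < 1"
          by (simp add: eventually_at_right_field) (auto intro: exI[of _ 1])
        then show ?thesis
          by eventually_elim (auto simp: g_def intro: sums_unique[symmetric] hE)
      qed
    qed
    ultimately have "g 0 = 0" using tendsto_unique trivial_limit_at_right_real by blast
    then show ?case by (simp add: g_def E_def)
  qed
  then show ?thesis by (simp add: D_def)
qed

context
  fixes q :: real
  assumes q0: "0 < q" and q1: "q < 1"
begin

definition cc :: "nat \<Rightarrow> nat \<Rightarrow> nat \<Rightarrow> real" where
  "cc n d m = (\<Sum>s\<in>Comp (Suc n) (Suc n + d). TT q (hd s + 1) m * ZZ q (tl s) m)"

lemma cc_nonneg: "0 \<le> cc n d m"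
  unfolding cc_def by (intro sum_nonneg mult_nonneg_nonneg TT_nonneg[OF q0 q1] ZZ_nonneg[OF q0 q1])

lemma cc_eq: "cc n d m = bb q m * (\<Sum>e\<le>d. aa q m * bb q m ^ e * HH q n (d - e) m)"
proof -
  have "cc n d m = (\<Sum>e\<le>d. \<Sum>s'\<in>Comp n (n + (d - e)). TT q (Suc e + 1) m * ZZ q s' m)"
    unfolding cc_def by (subst sum_Comp_Suc) simp
  also have "\<dots> = (\<Sum>e\<le>d. \<Sum>s'\<in>Comp n (n + (d - e)). bb q m * (aa q m * bb q m ^ e) * ZZ q s' m)"
    by (simp add: TT_eq[OF q0 q1] algebra_simps)
  also have "\<dots> = bb q m * (\<Sum>e\<le>d. aa q m * bb q m ^ e * HH q n (d - e) m)"
    by (simp add: HH_def[OF q0 q1] sum_distrib_left algebra_simps)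
  finally show ?thesis .
qed

lemma cc_gen: assumes t: "0 \<le> t" "t < 1"
  shows "(\<lambda>d. cc n d m * t ^ d) sums (bb q m * ff q t m * PP q t n m)"
proof -
  have s1: "summable (\<lambda>e. norm (aa q m * (t * bb q m) ^ e))"
    using geom_ff[OF q0 q1 t, of m] aa_nonneg[OF q0 q1, of m] bb_nonneg[OF q0 q1, of m] t
    by (simp add: sums_iff)
  have s2: "summable (\<lambda>d. norm (HH q n d m * t ^ d))"
    using HH_gen[OF q0 q1 t, of n m] HH_nonneg[OF q0 q1, of n _ m] t by (simp add: sums_iff)
  have "(\<lambda>d. \<Sum>e\<le>d. aa q m * (t * bb q m) ^ e * (HH q n (d - e) m * t ^ (d - e))) sums
      (ff q t m * PP q t n m)"
    using Cauchy_product_sums[OF s1 s2] geom_ff[OF q0 q1 t, of m] HH_gen[OF q0 q1 t, of n m]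
    by (simp add: sums_iff)
  from sums_mult[OF this, of "bb q m"] have
    "(\<lambda>d. bb q m * (\<Sum>e\<le>d. aa q m * (t * bb q m) ^ e * (HH q n (d - e) m * t ^ (d - e)))) sums
      (bb q m * ff q t m * PP q t n m)" by (simp add: algebra_simps)
  moreover have "bb q m * (\<Sum>e\<le>d. aa q m * (t * bb q m) ^ e * (HH q n (d - e) m * t ^ (d - e)))
      = cc n d m * t ^ d" for d
  proof -
    have "(\<Sum>e\<le>d. aa q m * (t * bb q m) ^ e * (HH q n (d - e) m * t ^ (d - e)))
       = (\<Sum>e\<le>d. aa q m * bb q m ^ e * HH q n (d - e) m * t ^ d)"
      by (rule sum.cong[OF refl]) (auto simp: power_mult_distrib power_add[symmetric] algebra_simps)
    also have "\<dots> = (\<Sum>e\<le>d. aa q m * bb q m ^ e * HH q n (d - e) m) * t ^ d"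
      by (simp add: sum_distrib_right)
    finally show ?thesis by (simp add: cc_eq)
  qed
  ultimately show ?thesis by simp
qed

lemma summ_R: assumes t: "0 \<le> t" "t < 1"
  shows "summable (\<lambda>p. ff q t p * bb q p ^ Suc j)"
proof (rule summable_comparison_test')
  show "summable (\<lambda>p. 1 / (1 - t) * q ^ p)" using q0 q1 by (intro summable_mult summable_geometric) auto
  fix p
  have "bb q p ^ Suc j \<le> bb q p" using bb_le1[OF q0 q1, of p] bb_nonneg[OF q0 q1, of p]
    by (simp add: mult_left_le power_le_one)
  also have "\<dots> \<le> q ^ p" by (rule bb_le[OF q0 q1])
  finally have "bb q p ^ Suc j \<le> q ^ p" .
  have "norm (ff q t p * bb q p ^ Suc j) = ff q t p * bb q p ^ Suc j"
    using ff_nonneg[OF q0 q1 t, of p] bb_nonneg[OF q0 q1, of p] by simp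
  also have "\<dots> \<le> 1 / (1 - t) * q ^ p"
    using ff_le[OF q0 q1 t, of p] ff_nonneg[OF q0 q1 t, of p] bb_nonneg[OF q0 q1, of p]
      \<open>bb q p ^ Suc j \<le> q ^ p\<close> t by (intro mult_mono) auto
  finally show "norm (ff q t p * bb q p ^ Suc j) \<le> 1 / (1 - t) * q ^ p" .
qed

lemma LHS_gen: assumes t: "0 < t" "t < 1"
  shows "(\<lambda>d. (\<Sum>m. cc n d m) * t ^ d) sums (\<Sum>p. ff q t p * bb q p ^ Suc n)"
    and "summable (\<lambda>m. cc n d m)"
proof -
  have t': "0 \<le> t" "t < 1" using t by auto
  define g where "g m d = cc n d m * t ^ d" for m d
  have nn: "0 \<le> g i j" for i j using cc_nonneg t by (simp add: g_def)
  have inner: "g m sums (bb q m * ff q t m * PP q t n m)" for m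
    unfolding g_def by (rule cc_gen[OF t'])
  have outer: "(\<lambda>m. bb q m * ff q t m * PP q t n m) sums (\<Sum>p. ff q t p * bb q p ^ Suc n)"
    by (rule MT[OF q0 q1 t'])
  have sw: "(\<lambda>d. \<Sum>m. g m d) sums (\<Sum>p. ff q t p * bb q p ^ Suc n)"
    by (rule swap_sums(1)[OF nn inner outer])
  have sm: "summable (\<lambda>m. g m d)" for d by (rule swap_sums(2)[OF nn inner outer])
  have sm': "summable (\<lambda>m. cc n d m)" for d
  proof -
    have "summable (\<lambda>m. g m d * (1 / t ^ d))" by (rule summable_mult2[OF sm])
    then show ?thesis using t by (simp add: g_def)
  qed
  then show "summable (\<lambda>m. cc n d m)" .
  have "(\<Sum>m. g m d) = (\<Sum>m. cc n d m) * t ^ d" for d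
    unfolding g_def by (rule suminf_mult2[OF sm', symmetric])
  then show "(\<lambda>d. (\<Sum>m. cc n d m) * t ^ d) sums (\<Sum>p. ff q t p * bb q p ^ Suc n)"
    using sw by simp
qed

lemma RHS_gen: assumes t: "0 < t" "t < 1"
  shows "(\<lambda>d. (\<Sum>m. aa q m * bb q m ^ (Suc n + d)) * t ^ d) sums (\<Sum>p. ff q t p * bb q p ^ Suc n)"
    and "summable (\<lambda>m. aa q m * bb q m ^ (Suc n + d))"
proof -
  have t': "0 \<le> t" "t < 1" using t by auto
  define g where "g m d = aa q m * bb q m ^ (Suc n + d) * t ^ d" for m d
  have nn: "0 \<le> g i j" for i j using t aa_nonneg[OF q0 q1] bb_nonneg[OF q0 q1] by (simp add: g_def)
  have inner: "g m sums (ff q t m * bb q m ^ Suc n)" for m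
  proof -
    have "g m = (\<lambda>d. aa q m * (t * bb q m) ^ d * bb q m ^ Suc n)"
      by (simp add: g_def fun_eq_iff power_add power_mult_distrib algebra_simps)
    then show ?thesis using sums_mult2[OF geom_ff[OF q0 q1 t', of m]] by simp
  qed
  have outer: "(\<lambda>m. ff q t m * bb q m ^ Suc n) sums (\<Sum>p. ff q t p * bb q p ^ Suc n)"
    by (rule summable_sums[OF summ_R[OF t']])
  have sw: "(\<lambda>d. \<Sum>m. g m d) sums (\<Sum>p. ff q t p * bb q p ^ Suc n)"
    by (rule swap_sums(1)[OF nn inner outer])
  have sm: "summable (\<lambda>m. g m d)" for d by (rule swap_sums(2)[OF nn inner outer])
  have sm': "summable (\<lambda>m. aa q m * bb q m ^ (Suc n + d))" for d
  proof -
    have "summable (\<lambda>m. g m d * (1 / t ^ d))" by (rule summable_mult2[OF sm])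
    then show ?thesis using t by (simp add: g_def)
  qed
  then show "summable (\<lambda>m. aa q m * bb q m ^ (Suc n + d))" .
  have "(\<Sum>m. g m d) = (\<Sum>m. aa q m * bb q m ^ (Suc n + d)) * t ^ d" for d
    unfolding g_def by (rule suminf_mult2[OF sm', symmetric])
  then show "(\<lambda>d. (\<Sum>m. aa q m * bb q m ^ (Suc n + d)) * t ^ d) sums (\<Sum>p. ff q t p * bb q p ^ Suc n)"
    using sw by simp
qed

lemma main_coeff: "(\<Sum>m. cc n d m) = (\<Sum>m. aa q m * bb q m ^ (Suc n + d))"
  by (rule powser_unique_pos[OF LHS_gen(1) RHS_gen(1)])

lemma TT_0: "x \<ge> 1 \<Longrightarrow> TT q x 0 = 0"
  by (simp add: TT_def[OF q0 q1] qint0[OF q0 q1])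

lemma qzeta_cons: assumes x: "x \<ge> 1" and sm: "summable (\<lambda>k. TT q x k * ZZ q s k)"
  shows "qzeta q (x # s) = (\<Sum>k. TT q x k * ZZ q s k)"
proof -
  define N where "N = length s"
  define F where "F ks = (\<Prod>j<Suc N. TT q ((x#s)!j) (ks!j))" for ks
  define A where "A = Sigma {0<..} (\<lambda>k. zeta_index N \<inter> below k)"
  define g where "g k = TT q x k * ZZ q s k" for k
  have q_eq: "qzeta q (x # s) = infsum F (zeta_index (Suc N))"
    unfolding qzeta_def F_def N_def TT_def[OF q0 q1] length_Cons ..
  have bij: "bij_betw (\<lambda>(k,ks). k # ks) A (zeta_index (Suc N))"
    unfolding bij_betw_def A_def zi_Suc by (auto simp: inj_on_def)
  have Fc: "F (k # ks) = TT q x k * (\<Prod>j<N. TT q (s!j) (ks!j))" for k ks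
    by (simp add: F_def prod.lessThan_Suc_shift del: prod.lessThan_Suc)
  have gnn: "0 \<le> g k" for k unfolding g_def by (intro mult_nonneg_nonneg TT_nonneg[OF q0 q1] ZZ_nonneg[OF q0 q1])
  have inner: "((\<lambda>ks. (\<lambda>(k,ks). F (k # ks)) (k, ks)) has_sum g k) (zeta_index N \<inter> below k)" for k
  proof -
    have "((\<lambda>ks. F (k # ks)) has_sum (\<Sum>ks\<in>zeta_index N \<inter> below k. F (k # ks))) (zeta_index N \<inter> below k)"
      by (rule has_sum_finite[OF finite_zi_below])
    moreover have "(\<Sum>ks\<in>zeta_index N \<inter> below k. F (k # ks)) = g k"
      by (simp add: Fc g_def ZZ_def[OF q0 q1] N_def sum_distrib_left)
    ultimately show ?thesis by simp
  qed
  have "(g has_sum (\<Sum>k. g k)) UNIV"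
    using sums_nonneg_imp_has_sum[OF summable_sums[OF sm[folded g_def]]] gnn by simp
  then have outer: "(g has_sum (\<Sum>k. g k)) {0<..}"
    by (rule has_sum_cong_neutral[THEN iffD1, rotated -1]) (auto simp: g_def TT_0[OF x])
  have summ: "(\<lambda>(k,ks). F (k # ks)) summable_on A"
    unfolding A_def
  proof (rule summable_on_SigmaI[OF inner])
    show "g summable_on {0<..}" using outer by (rule has_sum_imp_summable)
    show "0 \<le> (\<lambda>(k,ks). F (k # ks)) (k, ks)" for k ks
      by (simp add: F_def prod_nonneg TT_nonneg[OF q0 q1])
  qed
  have "((\<lambda>(k,ks). F (k # ks)) has_sum (\<Sum>k. g k)) A"
    unfolding A_def by (rule has_sum_SigmaI[OF inner outer summ[unfolded A_def]])
  then have "((\<lambda>p. F ((\<lambda>(k,ks). k # ks) p)) has_sum (\<Sum>k. g k)) A"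
    by (simp add: case_prod_unfold)
  then have "(F has_sum (\<Sum>k. g k)) (zeta_index (Suc N))"
    using has_sum_reindex_bij_betw[OF bij] by blast
  then show ?thesis using q_eq by (simp add: infsumI g_def)
qed

end

theorem corollary3p3:
  fixes q :: real and n k :: nat
  assumes "0 < q" "q < 1" "1 \<le> n" "n \<le> k"
  shows "(\<Sum>s\<in>{s :: nat list. length s = n \<and> (\<forall>x\<in>set s. 1 \<le> x) \<and> sum_list s = k}.
            qzeta q ((hd s + 1) # tl s)) = qzeta q [k + 1]"
proof -
  note q0 = assms(1) and q1 = assms(2)
  obtain n' where n: "n = Suc n'" using assms(3) by (cases n) auto
  define d where "d = k - n"
  have k: "k = Suc n' + d" using assms(4) n by (simp add: d_def)
  have set_eq: "{s :: nat list. length s = n \<and> (\<forall>x\<in>set s. 1 \<le> x) \<and> sum_list s = k} = Comp (Suc n') (Suc n' + d)"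
    by (simp add: Comp_def n k)
  define f where "f s m = TT q (hd s + 1) m * ZZ q (tl s) m" for s m
  have smc: "summable (\<lambda>m. cc q n' d m)"
    by (rule LHS_gen(2)[OF q0 q1, of "1/2"]) auto
  have sm: "summable (f s)" if s: "s \<in> Comp (Suc n') (Suc n' + d)" for s
  proof (rule summable_comparison_test'[OF smc])
    fix m
    have "f s m \<le> (\<Sum>s\<in>Comp (Suc n') (Suc n' + d). f s m)"
      by (rule member_le_sum[OF s])
        (auto simp: f_def finite_Comp intro!: mult_nonneg_nonneg TT_nonneg[OF q0 q1] ZZ_nonneg[OF q0 q1])
    moreover have "0 \<le> f s m" by (auto simp: f_def intro!: mult_nonneg_nonneg TT_nonneg[OF q0 q1] ZZ_nonneg[OF q0 q1])
    ultimately show "norm (f s m) \<le> cc q n' d m" by (simp add: cc_def[OF q0 q1] f_def)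
  qed
  have qz: "qzeta q ((hd s + 1) # tl s) = (\<Sum>m. f s m)" if s: "s \<in> Comp (Suc n') (Suc n' + d)" for s
    unfolding f_def by (rule qzeta_cons[OF q0 q1]) (use sm[OF s] in \<open>simp_all add: f_def[abs_def]\<close>)
  have "(\<Sum>s\<in>Comp (Suc n') (Suc n' + d). qzeta q ((hd s + 1) # tl s))
      = (\<Sum>s\<in>Comp (Suc n') (Suc n' + d). \<Sum>m. f s m)" by (rule sum.cong[OF refl]) (rule qz)
  also have "\<dots> = (\<Sum>m. \<Sum>s\<in>Comp (Suc n') (Suc n' + d). f s m)"
    by (rule suminf_sum[symmetric]) (rule sm)
  also have "\<dots> = (\<Sum>m. cc q n' d m)" by (simp add: cc_def[OF q0 q1] f_def)
  also have "\<dots> = (\<Sum>m. aa q m * bb q m ^ (Suc n' + d))" by (rule main_coeff[OF q0 q1])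
  also have "\<dots> = qzeta q [k + 1]"
  proof -
    have e: "TT q (k + 1) m * ZZ q [] m = aa q m * bb q m ^ (Suc n' + d)" for m
      by (simp add: TT_eq[OF q0 q1] ZZ_Nil[OF q0 q1] k)
    have "summable (\<lambda>m. TT q (k + 1) m * ZZ q [] m)"
      unfolding e by (rule RHS_gen(2)[OF q0 q1, of "1/2"]) auto
    from qzeta_cons[OF q0 q1 _ this] show ?thesis unfolding e by simp
  qed
  finally show ?thesis unfolding set_eq .
qed

end
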